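(* Let $X$ be a Hausdorff space. The following are equivalent: (a) $X$ is a weak $P$-space; (b) $\mathcal{K}(X)$ is a weak $P$-space; (c) $\mathcal{F}(X)$ is a weak $P$-space; (d) $\mathcal{F}_n(X)$ is a weak $P$-space for some positive integer $n$.
   Context: For a $T_1$ space $X$, $\mathcal{K}(X)$ is the set of nonempty compact subsets of $X$ with the Vietoris topology (generated by $U^+=\{A: A\subset U\}$ and $U^-=\{A: A\cap U\neq\emptyset\}$ for $U$ open in $X$); $\mathcal{F}(X)$ and $\mathcal{F}_n(X)$ are its subspaces of nonempty finite subsets and of nonempty subsets with at most $n$ points. A point $p$ of a space $Z$ is a weak $P$-point if $p\notin\overline{N}$ for every countable $N\subset Z-\{p\}$; $Z$ is a weak $P$-space if all its points are weak $P$-points. *)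

theory Defs
  imports "HOL-Analysis.Analysis"
begin

definition compact_subsets :: "'a topology \<Rightarrow> 'a set set" where
  "compact_subsets X = {A. A \<noteq> {} \<and> compactin X A}"

definition vietoris :: "'a topology \<Rightarrow> 'a set topology" where
  "vietoris X = topology_generated_by
     ({ {A \<in> compact_subsets X. A \<subseteq> U} | U. openin X U } \<union>
      { {A \<in> compact_subsets X. A \<inter> U \<noteq> {}} | U. openin X U })"

definition hyp_finite :: "'a topology \<Rightarrow> 'a set topology" where
  "hyp_finite X = subtopology (vietoris X) {A \<in> compact_subsets X. finite A}"

definition hyp_finite_n :: "'a topology \<Rightarrow> nat \<Rightarrow> 'a set topology" where
  "hyp_finite_n X n = subtopology (vietoris X) {A \<in> compact_subsets X. finite A \<and> card A \<le> n}"

definition weak_P_point :: "'b topology \<Rightarrow> 'b \<Rightarrow> bool" where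
  "weak_P_point Z p \<longleftrightarrow> p \<in> topspace Z \<and>
     (\<forall>N. countable N \<and> N \<subseteq> topspace Z - {p} \<longrightarrow> p \<notin> Z closure_of N)"

definition weak_P_space :: "'b topology \<Rightarrow> bool" where
  "weak_P_space Z \<longleftrightarrow> (\<forall>p \<in> topspace Z. weak_P_point Z p)"

end

theory Submission
  imports Defs
begin

lemma wP_iff:
  "weak_P_space Z \<longleftrightarrow> (\<forall>N. countable N \<and> N \<subseteq> topspace Z \<longrightarrow> closedin Z N)"
proof
  assume H: "weak_P_space Z"
  show "\<forall>N. countable N \<and> N \<subseteq> topspace Z \<longrightarrow> closedin Z N"
  proof (intro allI impI)
    fix N assume N: "countable N \<and> N \<subseteq> topspace Z"
    have "Z closure_of N \<subseteq> N"
    proof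
      fix p assume p: "p \<in> Z closure_of N"
      show "p \<in> N"
      proof (rule ccontr)
        assume "p \<notin> N"
        hence "N \<subseteq> topspace Z - {p}" using N by auto
        moreover have "p \<in> topspace Z" using p in_closure_of by metis
        ultimately show False using H p N unfolding weak_P_space_def weak_P_point_def by blast
      qed
    qed
    thus "closedin Z N" using closure_of_subset[of N Z] N closure_of_eq[of Z N] by blast
  qed
next
  assume H: "\<forall>N. countable N \<and> N \<subseteq> topspace Z \<longrightarrow> closedin Z N"
  show "weak_P_space Z"
    unfolding weak_P_space_def weak_P_point_def
  proof (intro ballI conjI allI impI)
    fix p N assume "p \<in> topspace Z" and N: "countable N \<and> N \<subseteq> topspace Z - {p}"
    then have "closedin Z N" using H by blast
    thus "p \<notin> Z closure_of N" using N closure_of_closedin by fastforce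
  qed simp
qed

lemma wP_sub:
  assumes "weak_P_space Z" shows "weak_P_space (subtopology Z S)"
  unfolding wP_iff
proof (intro allI impI)
  fix N assume N: "countable N \<and> N \<subseteq> topspace (subtopology Z S)"
  hence "closedin Z N" using assms unfolding wP_iff by auto
  moreover have "N = N \<inter> S" using N by auto
  ultimately show "closedin (subtopology Z S) N" unfolding closedin_subtopology by blast
qed

lemma wP_compact_finite:
  assumes wp: "weak_P_space X" and c: "compactin X A"
  shows "finite A"
proof (rule ccontr)
  assume "infinite A"
  then obtain f :: "nat \<Rightarrow> _" where f: "inj f" "range f \<subseteq> A"
    using infinite_countable_subset by blast
  define D where "D = range f"
  have AT: "A \<subseteq> topspace X" using c compactin_subset_topspace by blast
  have DA: "D \<subseteq> A" using f D_def by auto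
  have Dinf: "infinite D" unfolding D_def using f(1) finite_imageD by (metis finite_UNIV infinite_UNIV_char_0 inj_on_subset subset_UNIV)
  have cD: "countable D" unfolding D_def by simp
  have cl: "\<And>E. E \<subseteq> D \<Longrightarrow> closedin X E"
    using wp unfolding wP_iff by (meson DA AT countable_subset cD subset_trans)
  define g where "g = (\<lambda>d. topspace X - (D - {d}))"
  define U where "U = insert (topspace X - D) (g ` D)"
  have "\<forall>V\<in>U. openin X V" unfolding U_def g_def using cl
    by (auto intro!: openin_diff)
  moreover have "A \<subseteq> \<Union>U" unfolding U_def g_def using AT by auto
  ultimately obtain F where F: "finite F" "F \<subseteq> U" "A \<subseteq> \<Union>F"
    using c unfolding compactin_def by meson
  define F' where "F' = {d \<in> D. g d \<in> F}"
  have injg: "inj_on g D" unfolding g_def inj_on_def using DA AT by blast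
  have "g ` F' \<subseteq> F" unfolding F'_def by auto
  hence "finite (g ` F')" using F(1) finite_subset by blast
  hence "finite F'" using injg finite_imageD[of g F'] inj_on_subset[of g D F'] F'_def by auto
  then obtain d where d: "d \<in> D" "d \<notin> F'" using Dinf
    by (metis F'_def mem_Collect_eq subsetI finite_subset)
  then obtain V where V: "V \<in> F" "d \<in> V" using F(3) DA by blast
  then have "V \<in> U" using F(2) by blast
  then show False unfolding U_def
  proof
    assume "V = topspace X - D" thus False using V d by blast
  next
    assume "V \<in> g ` D"
    then obtain e where e: "e \<in> D" "V = g e" by blast
    then have "d = e" using V d unfolding g_def by blast
    thus False using d e V F'_def by blast
  qed
qed

lemma topspace_vietoris: "topspace (vietoris X) = compact_subsets X"
  unfolding vietoris_def topology_generated_by_topspace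
proof
  show "compact_subsets X \<subseteq> \<Union> ({ {A \<in> compact_subsets X. A \<subseteq> U} | U. openin X U } \<union>
      { {A \<in> compact_subsets X. A \<inter> U \<noteq> {}} | U. openin X U })"
  proof
    fix A assume A: "A \<in> compact_subsets X"
    hence "A \<subseteq> topspace X" unfolding compact_subsets_def using compactin_subset_topspace by blast
    hence "A \<in> {B \<in> compact_subsets X. B \<subseteq> topspace X}" using A by blast
    moreover have "{B \<in> compact_subsets X. B \<subseteq> topspace X} \<in> { {A \<in> compact_subsets X. A \<subseteq> U} | U. openin X U }"
      using openin_topspace[of X] by blast
    ultimately show "A \<in> \<Union> ({ {A \<in> compact_subsets X. A \<subseteq> U} | U. openin X U } \<union>
      { {A \<in> compact_subsets X. A \<inter> U \<noteq> {}} | U. openin X U })" by (meson UnionI UnI1)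
  qed
qed auto

lemma open_upper: "openin X U \<Longrightarrow> openin (vietoris X) {A \<in> compact_subsets X. A \<subseteq> U}"
  unfolding vietoris_def by (rule topology_generated_by_Basis) blast

lemma open_lower: "openin X U \<Longrightarrow> openin (vietoris X) {A \<in> compact_subsets X. A \<inter> U \<noteq> {}}"
  unfolding vietoris_def by (rule topology_generated_by_Basis) blast

lemma sing_cs: "x \<in> topspace X \<Longrightarrow> {x} \<in> compact_subsets X"
  unfolding compact_subsets_def by auto

lemma cont_sing: "continuous_map X (vietoris X) (\<lambda>x. {x})"
proof -
  have ts: "topspace (vietoris X) = \<Union> ({ {A \<in> compact_subsets X. A \<subseteq> U} | U. openin X U } \<union>
      { {A \<in> compact_subsets X. A \<inter> U \<noteq> {}} | U. openin X U })"
    unfolding vietoris_def by simp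
  show ?thesis unfolding vietoris_def
  proof (rule continuous_on_generated_topo)
    fix V assume "V \<in> { {A \<in> compact_subsets X. A \<subseteq> U} | U. openin X U } \<union>
      { {A \<in> compact_subsets X. A \<inter> U \<noteq> {}} | U. openin X U }"
    then obtain U where U: "openin X U" and
      "V = {A \<in> compact_subsets X. A \<subseteq> U} \<or> V = {A \<in> compact_subsets X. A \<inter> U \<noteq> {}}" by blast
    then have "(\<lambda>x. {x}) -` V \<inter> topspace X = U"
      using openin_subset[OF U] sing_cs[of _ X] by auto
    thus "openin X ((\<lambda>x. {x}) -` V \<inter> topspace X)" using U by simp
  next
    show "(\<lambda>x. {x}) ` topspace X \<subseteq> \<Union> ({ {A \<in> compact_subsets X. A \<subseteq> U} | U. openin X U } \<union>
      { {A \<in> compact_subsets X. A \<inter> U \<noteq> {}} | U. openin X U })"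
      unfolding ts[symmetric] topspace_vietoris using sing_cs[of _ X] by blast
  qed
qed

lemma wP_vietoris:
  assumes wp: "weak_P_space X" shows "weak_P_space (vietoris X)"
  unfolding weak_P_space_def weak_P_point_def
proof (intro ballI conjI allI impI)
  fix A \<NN> assume A: "A \<in> topspace (vietoris X)"
    and N: "countable \<NN> \<and> \<NN> \<subseteq> topspace (vietoris X) - {A}"
  have cs: "\<And>B. B \<in> compact_subsets X \<Longrightarrow> finite B \<and> B \<subseteq> topspace X \<and> B \<noteq> {}"
    unfolding compact_subsets_def using wP_compact_finite[OF wp] compactin_subset_topspace by blast
  have Acs: "A \<in> compact_subsets X" using A topspace_vietoris by blast
  hence Af: "finite A" "A \<subseteq> topspace X" using cs by auto
  define S where "S = \<Union>\<NN>"
  have NS: "\<And>B. B \<in> \<NN> \<Longrightarrow> B \<in> compact_subsets X \<and> B \<noteq> A" using N topspace_vietoris by blast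
  have "countable (\<Union>B\<in>\<NN>. B)"
    by (rule countable_UN) (use N NS cs countable_finite in auto)
  hence Sc: "countable S" unfolding S_def by simp
  have ST: "S \<subseteq> topspace X" unfolding S_def using NS cs by blast
  have cl: "\<And>E. E \<subseteq> S \<Longrightarrow> closedin X E"
    using wp unfolding wP_iff by (meson Sc ST countable_subset subset_trans)
  define U0 where "U0 = topspace X - (S - A)"
  define W where "W = (\<lambda>a. topspace X - (S - {a}))"
  have oU0: "openin X U0" unfolding U0_def using cl by (auto intro!: openin_diff)
  have oW: "\<And>a. openin X (W a)" unfolding W_def using cl by (auto intro!: openin_diff)
  define V where "V = \<Inter> (insert {B \<in> compact_subsets X. B \<subseteq> U0}
                        ((\<lambda>a. {B \<in> compact_subsets X. B \<inter> W a \<noteq> {}}) ` A))"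
  have oV: "openin (vietoris X) V" unfolding V_def
    by (rule openin_Inter) (use Af open_upper[OF oU0] open_lower[OF oW] in auto)
  have AV: "A \<in> V" unfolding V_def U0_def W_def using Acs Af by auto
  show "A \<notin> vietoris X closure_of \<NN>"
  proof
    assume "A \<in> vietoris X closure_of \<NN>"
    then obtain B where B: "B \<in> \<NN>" "B \<in> V" using oV AV unfolding in_closure_of by blast
    have BS: "B \<subseteq> S" unfolding S_def using B by blast
    have "B \<subseteq> U0" using B(2) unfolding V_def by blast
    hence "B \<subseteq> A" using BS unfolding U0_def by blast
    moreover have "A \<subseteq> B"
    proof
      fix a assume a: "a \<in> A"
      have "(\<lambda>a. {B \<in> compact_subsets X. B \<inter> W a \<noteq> {}}) a \<in> insert {B \<in> compact_subsets X. B \<subseteq> U0}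
                        ((\<lambda>a. {B \<in> compact_subsets X. B \<inter> W a \<noteq> {}}) ` A)"
        using a by (intro insertI2 imageI)
      hence "B \<in> (\<lambda>a. {B \<in> compact_subsets X. B \<inter> W a \<noteq> {}}) a"
        using B(2) unfolding V_def by (rule InterD[rotated])
      hence "B \<inter> W a \<noteq> {}" by simp
      then obtain b where "b \<in> B" "b \<in> W a" by blast
      thus "a \<in> B" using BS unfolding W_def by blast
    qed
    ultimately show False using NS[OF B(1)] by blast
  qed
qed simp

lemma wP_back:
  assumes T: "\<forall>x\<in>topspace X. {x} \<in> T"
    and wp: "weak_P_space (subtopology (vietoris X) T)"
  shows "weak_P_space X"
  unfolding weak_P_space_def weak_P_point_def
proof (intro ballI conjI allI impI)
  fix p N assume p: "p \<in> topspace X" and N: "countable N \<and> N \<subseteq> topspace X - {p}"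
  define Z where "Z = subtopology (vietoris X) T"
  have fc: "continuous_map X Z (\<lambda>x. {x})"
    unfolding Z_def using T by (intro continuous_map_into_subtopology[OF cont_sing]) auto
  have pZ: "{p} \<in> topspace Z" unfolding Z_def topspace_subtopology topspace_vietoris
    using p T sing_cs[OF p] by blast
  have NZ: "(\<lambda>x. {x}) ` N \<subseteq> topspace Z - {{p}}"
    using N fc continuous_map_image_subset_topspace by fastforce
  have cN: "countable ((\<lambda>x. {x}) ` N)" using N by simp
  have "{p} \<notin> Z closure_of ((\<lambda>x. {x}) ` N)"
    using wp pZ NZ cN unfolding Z_def weak_P_space_def weak_P_point_def by blast
  thus "p \<notin> X closure_of N"
    using continuous_map_image_closure_subset[OF fc, of N] by blast
qed simp

theorem theorem4p4:
  fixes X :: "'a topology"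
  assumes "Hausdorff_space X"
  shows "(weak_P_space X \<longleftrightarrow> weak_P_space (vietoris X))
       \<and> (weak_P_space X \<longleftrightarrow> weak_P_space (hyp_finite X))
       \<and> (weak_P_space X \<longleftrightarrow> (\<exists>n::nat. n \<ge> 1 \<and> weak_P_space (hyp_finite_n X n)))"
proof (intro conjI iffI)
  assume "weak_P_space X" thus "weak_P_space (vietoris X)" by (rule wP_vietoris)
next
  assume "weak_P_space (vietoris X)"
  hence "weak_P_space (subtopology (vietoris X) (topspace (vietoris X)))" by simp
  thus "weak_P_space X" by (rule wP_back[rotated]) (simp add: topspace_vietoris sing_cs)
next
  assume "weak_P_space X" thus "weak_P_space (hyp_finite X)"
    unfolding hyp_finite_def by (intro wP_sub wP_vietoris)
next
  assume "weak_P_space (hyp_finite X)"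
  thus "weak_P_space X" unfolding hyp_finite_def
    by (rule wP_back[rotated]) (simp add: sing_cs)
next
  assume "weak_P_space X"
  hence "weak_P_space (hyp_finite_n X 1)"
    unfolding hyp_finite_n_def by (intro wP_sub wP_vietoris)
  thus "\<exists>n::nat. n \<ge> 1 \<and> weak_P_space (hyp_finite_n X n)" by blast
next
  assume "\<exists>n::nat. n \<ge> 1 \<and> weak_P_space (hyp_finite_n X n)"
  then obtain n :: nat where n: "n \<ge> 1" "weak_P_space (hyp_finite_n X n)" by blast
  from n(2) show "weak_P_space X" unfolding hyp_finite_n_def
    by (rule wP_back[rotated]) (use sing_cs n(1) in auto)
qed

end
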